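(* Let $\Sigma\in\mathbb{R}^{p\times p}$ be a covariance matrix, $\sigma>0$, and for $\beta\in\mathbb{R}^p$ let $P_\beta$ be the law of $(X,y)\in\mathbb{R}^p\times\mathbb{R}$ with $X\sim N(0,\Sigma)$ and $y\mid X\sim N(\beta^TX,\sigma^2)$. For $\mathcal{U}\subset\mathbb{R}^p\setminus\{0\}$ let $\mathcal{D}_{\mathcal{U}}(\alpha,\mathbb{P})=\inf_{u\in\mathcal{U}}\mathbb{P}\{u^TX(y-X^T\alpha)\ge0\}$. There is a universal constant $C>0$ such that for any $\alpha\in\mathbb{R}^p$ with $\alpha-\beta\in\mathcal{U}$, if $\mathcal{D}_{\mathcal{U}}(\alpha,P_\beta)\ge\frac12-\eta$ for some $\eta<\frac5{12}$, then $\|\Sigma^{1/2}(\alpha-\beta)\|\le C\sigma\eta$. *)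

theory Defs
  imports "HOL-Probability.Probability"
begin

text \<open>Vectors of R^p are represented as functions nat => real that vanish
  at indices >= p; p x p matrices as functions nat => nat => real (only indices < p matter).\<close>

definition rvec :: "nat \<Rightarrow> (nat \<Rightarrow> real) set" where
  "rvec p = {v. \<forall>i\<ge>p. v i = 0}"

definition dotp :: "nat \<Rightarrow> (nat \<Rightarrow> real) \<Rightarrow> (nat \<Rightarrow> real) \<Rightarrow> real" where
  "dotp p u v = (\<Sum>i<p. u i * v i)"

definition quad_form :: "nat \<Rightarrow> (nat \<Rightarrow> nat \<Rightarrow> real) \<Rightarrow> (nat \<Rightarrow> real) \<Rightarrow> real" where
  "quad_form p S v = (\<Sum>i<p. \<Sum>j<p. v i * S i j * v j)"

definition covariance_matrix :: "nat \<Rightarrow> (nat \<Rightarrow> nat \<Rightarrow> real) \<Rightarrow> bool" where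
  "covariance_matrix p S \<longleftrightarrow> (\<forall>i<p. \<forall>j<p. S i j = S j i) \<and> (\<forall>v. 0 \<le> quad_form p S v)"

definition rvec_space :: "nat \<Rightarrow> (nat \<Rightarrow> real) measure" where
  "rvec_space p = PiM {..<p} (\<lambda>_. lborel)"

definition normal_law :: "real \<Rightarrow> real \<Rightarrow> real measure" where
  "normal_law m s2 = (if 0 < s2 then density lborel (normal_density m (sqrt s2)) else return lborel m)"

text \<open>M is the law N(0,S) on R^p: every linear functional v^T X is N(0, v^T S v).\<close>
definition centered_gaussian :: "nat \<Rightarrow> (nat \<Rightarrow> nat \<Rightarrow> real) \<Rightarrow> (nat \<Rightarrow> real) measure \<Rightarrow> bool" where
  "centered_gaussian p S M \<longleftrightarrow> sets M = sets (rvec_space p) \<and> prob_space M \<and>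
     (\<forall>v. distr M lborel (\<lambda>x. dotp p v x) = normal_law 0 (quad_form p S v))"

text \<open>Law P_beta of (X, y) where X ~ M and y = beta^T X + eps, eps ~ N(0, sigma^2) independent of X,
  i.e. y | X ~ N(beta^T X, sigma^2).\<close>
definition regression_law :: "nat \<Rightarrow> real \<Rightarrow> (nat \<Rightarrow> real) \<Rightarrow> (nat \<Rightarrow> real) measure
    \<Rightarrow> ((nat \<Rightarrow> real) \<times> real) measure" where
  "regression_law p \<sigma> \<beta> M =
     distr (M \<Otimes>\<^sub>M normal_law 0 (\<sigma>\<^sup>2)) (rvec_space p \<Otimes>\<^sub>M lborel)
       (\<lambda>(x, e). (x, dotp p \<beta> x + e))"

definition depth :: "nat \<Rightarrow> (nat \<Rightarrow> real) set \<Rightarrow> (nat \<Rightarrow> real) \<Rightarrow> ((nat \<Rightarrow> real) \<times> real) measure \<Rightarrow> real" where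
  "depth p U \<alpha> P = (INF u\<in>U. measure P {z \<in> space P. 0 \<le> dotp p u (fst z) * (snd z - dotp p (fst z) \<alpha>)})"

end

theory Submission imports Defs begin

lemma nd_sym_fun: "normal_density 0 s (- x) = normal_density 0 s x"
  by (simp add: normal_density_def)

lemma nd_emeasure_sym:
  assumes A: "A \<in> sets borel"
  shows "emeasure (density lborel (normal_density 0 s)) (uminus -` A) = emeasure (density lborel (normal_density 0 s)) A"
proof -
  have um: "(uminus::real\<Rightarrow>real) \<in> borel_measurable borel" by simp
  have m: "uminus -` A \<in> sets borel" using measurable_sets[OF um A] by simp
  have "emeasure (density lborel (normal_density 0 s)) A = (\<integral>\<^sup>+x. ennreal (normal_density 0 s x) * indicator A x \<partial>lborel)"
    using A by (simp add: emeasure_density)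
  also have "\<dots> = \<bar>-1::real\<bar> * (\<integral>\<^sup>+x. ennreal (normal_density 0 s (0 + -1 * x)) * indicator A (0 + -1 * x) \<partial>lborel)"
    by (rule nn_integral_real_affine) (use A in auto)
  also have "\<dots> = (\<integral>\<^sup>+x. ennreal (normal_density 0 s x) * indicator (uminus -` A) x \<partial>lborel)"
    by (simp add: nd_sym_fun indicator_def)
  also have "\<dots> = emeasure (density lborel (normal_density 0 s)) (uminus -` A)"
    using m by (simp add: emeasure_density)
  finally show ?thesis by simp
qed

lemma nd_prob: "0 < s \<Longrightarrow> prob_space (density lborel (normal_density 0 s))"
  by (rule prob_space_normal_density)

lemma nd_emeasure_eq: "0 < s \<Longrightarrow> emeasure (density lborel (normal_density 0 s)) A = ennreal (measure (density lborel (normal_density 0 s)) A)"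
  using finite_measure.emeasure_eq_measure[OF prob_space.finite_measure[OF nd_prob]] by blast

lemma nd_mono: assumes "0 < s" "\<bar>x\<bar> \<le> \<bar>y\<bar>" shows "normal_density 0 s y \<le> normal_density 0 s x"
proof -
  have "x\<^sup>2 \<le> y\<^sup>2" using assms(2) by (metis abs_le_square_iff) 
  then have "- y\<^sup>2 / (2 * s\<^sup>2) \<le> - x\<^sup>2 / (2 * s\<^sup>2)" using assms(1) by (simp add: divide_right_mono)
  then have "exp (- y\<^sup>2 / (2 * s\<^sup>2)) \<le> exp (- x\<^sup>2 / (2 * s\<^sup>2))" by simp
  then show ?thesis unfolding normal_density_def by (simp add: divide_right_mono)
qed

lemma nd_interval_lower:
  assumes "0 < s" "0 \<le> a" "a \<le> b"
  shows "(b - a) * normal_density 0 s b \<le> measure (density lborel (normal_density 0 s)) {a<..<b}"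
proof -
  have "ennreal ((b - a) * normal_density 0 s b) = (\<integral>\<^sup>+x. ennreal (normal_density 0 s b) * indicator {a<..<b} x \<partial>lborel)"
    using assms by (simp add: nn_integral_cmult ennreal_mult' mult.commute)
  also have "\<dots> \<le> (\<integral>\<^sup>+x. ennreal (normal_density 0 s x) * indicator {a<..<b} x \<partial>lborel)"
    apply (rule nn_integral_mono)
    using assms by (auto simp: indicator_def intro!: nd_mono)
  also have "\<dots> = emeasure (density lborel (normal_density 0 s)) {a<..<b}"
    by (simp add: emeasure_density)
  finally show ?thesis using assms by (simp add: nd_emeasure_eq ennreal_le_iff)
qed

lemma nd_interval_upper:
  assumes "0 < s" "0 \<le> b"
  shows "measure (density lborel (normal_density 0 s)) {0<..b} \<le> b * normal_density 0 s 0"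
proof -
  have "emeasure (density lborel (normal_density 0 s)) {0<..b} = (\<integral>\<^sup>+x. ennreal (normal_density 0 s x) * indicator {0<..b} x \<partial>lborel)"
    by (simp add: emeasure_density)
  also have "\<dots> \<le> (\<integral>\<^sup>+x. ennreal (normal_density 0 s 0) * indicator {0<..b} x \<partial>lborel)"
    apply (rule nn_integral_mono)
    using assms by (auto simp: indicator_def intro!: nd_mono)
  also have "\<dots> = ennreal (b * normal_density 0 s 0)"
    using assms by (simp add: nn_integral_cmult ennreal_mult' mult.commute)
  finally show ?thesis using assms by (simp add: nd_emeasure_eq ennreal_le_iff)
qed

lemma nd_tail:
  assumes "0 < s" "0 < t"
  shows "measure (density lborel (normal_density 0 s)) {t..} \<le> s\<^sup>2 / t\<^sup>2"
proof -
  have hb: "has_bochner_integral lborel (\<lambda>x. normal_density 0 s x * (x - 0) ^ (2 * 1)) (fact (2 * 1) / ((2 / s\<^sup>2)^1 * fact 1))"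
    by (rule normal_moment_even) (rule assms(1))
  have hb2: "has_bochner_integral lborel (\<lambda>x. normal_density 0 s x * x\<^sup>2) (s\<^sup>2)"
    using hb assms by (simp add: power2_eq_square)
  have "emeasure (density lborel (normal_density 0 s)) {t..} = (\<integral>\<^sup>+x. ennreal (normal_density 0 s x) * indicator {t..} x \<partial>lborel)"
    by (simp add: emeasure_density)
  also have "\<dots> \<le> (\<integral>\<^sup>+x. ennreal (1 / t\<^sup>2) * ennreal (normal_density 0 s x * x\<^sup>2) \<partial>lborel)"
  proof (rule nn_integral_mono)
    fix x
    show "ennreal (normal_density 0 s x) * indicator {t..} x \<le> ennreal (1 / t\<^sup>2) * ennreal (normal_density 0 s x * x\<^sup>2)"
    proof (cases "t \<le> x")
      case True
      have "t\<^sup>2 \<le> x\<^sup>2" using True assms by (simp add: power_mono)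
      then have "1 \<le> x\<^sup>2 / t\<^sup>2" using assms by simp
      then have "normal_density 0 s x \<le> 1 / t\<^sup>2 * (normal_density 0 s x * x\<^sup>2)"
        using mult_left_mono[OF \<open>1 \<le> x\<^sup>2 / t\<^sup>2\<close> normal_density_nonneg[of 0 s x]] by (simp add: field_simps)
      then show ?thesis using True by (simp add: ennreal_mult'[symmetric] ennreal_leI)
    qed simp
  qed
  also have "\<dots> = ennreal (1 / t\<^sup>2) * (\<integral>\<^sup>+x. ennreal (normal_density 0 s x * x\<^sup>2) \<partial>lborel)"
    by (simp add: nn_integral_cmult)
  also have "(\<integral>\<^sup>+x. ennreal (normal_density 0 s x * x\<^sup>2) \<partial>lborel) = ennreal (s\<^sup>2)"
    using hb2 unfolding has_bochner_integral_iff by (subst nn_integral_eq_integral) auto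
  finally have "emeasure (density lborel (normal_density 0 s)) {t..} \<le> ennreal (s\<^sup>2 / t\<^sup>2)"
    by (simp add: ennreal_mult'[symmetric])
  then show ?thesis using assms by (simp add: nd_emeasure_eq ennreal_le_iff)
qed

lemma nd_measure_sym:
  assumes "A \<in> sets borel"
  shows "measure (density lborel (normal_density 0 s)) (uminus -` A) = measure (density lborel (normal_density 0 s)) A"
  unfolding measure_def using nd_emeasure_sym[OF assms] by simp

lemma nd_zero: assumes "0 < s" shows "measure (density lborel (normal_density 0 s)) {0} = 0"
proof -
  have "emeasure (density lborel (normal_density 0 s)) {0} = (\<integral>\<^sup>+x. ennreal (normal_density 0 s x) * indicator {0..0} x \<partial>lborel)"
    by (simp add: emeasure_density)
  also have "\<dots> \<le> (\<integral>\<^sup>+x. ennreal (normal_density 0 s 0) * indicator {0..0::real} x \<partial>lborel)"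
    by (intro nn_integral_mono) (auto simp: indicator_def)
  also have "\<dots> = 0"
    by (simp add: nn_integral_cmult)
  finally show ?thesis unfolding measure_def by simp
qed

lemma nd_half:
  assumes "0 < s"
  shows "measure (density lborel (normal_density 0 s)) {0<..} = 1/2"
    and "measure (density lborel (normal_density 0 s)) {..<0} = 1/2"
proof -
  let ?N = "density lborel (normal_density 0 s)"
  interpret prob_space ?N by (rule nd_prob[OF assms])
  have e: "measure ?N {..<0} = measure ?N {0<..}"
    using nd_measure_sym[of "{0<..}" s] by (simp add: vimage_def lessThan_def)
  have u: "UNIV = ({..<0} \<union> {0}) \<union> ({0<..} :: real set)" by auto
  have "1 = measure ?N UNIV" using prob_space by simp
  also have "\<dots> = measure ?N ({..<0} \<union> {0}) + measure ?N {0<..}"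
    by (subst u, rule finite_measure_Union) auto
  also have "measure ?N ({..<0} \<union> {0}) = measure ?N {..<0} + measure ?N {0}"
    by (rule finite_measure_Union) auto
  finally have "1 = 2 * measure ?N {0<..}" using e nd_zero[OF assms] by simp
  then show "measure ?N {0<..} = 1/2" "measure ?N {..<0} = 1/2" using e by auto
qed

lemma nd_val: "0 < t \<Longrightarrow> normal_density 0 t x = exp (- x\<^sup>2 / (2 * t\<^sup>2)) / (sqrt (2 * pi) * t)"
  unfolding normal_density_def by (simp add: real_sqrt_mult)

lemma nd_mono_set:
  assumes "0 < t" "A \<in> sets borel" "B \<in> sets borel" "A \<subseteq> B"
  shows "measure (density lborel (normal_density 0 t)) A \<le> measure (density lborel (normal_density 0 t)) B"
proof -
  interpret prob_space "density lborel (normal_density 0 t)" by (rule nd_prob[OF assms(1)])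
  show ?thesis using assms by (intro finite_measure_mono) auto
qed

lemma bound_a1:
  assumes "0 < t" "s \<le> t"
  shows "exp (-2) / sqrt (2 * pi) \<le> measure (density lborel (normal_density 0 t)) {s<..}"
proof -
  have "(2*t - t) * normal_density 0 t (2*t) \<le> measure (density lborel (normal_density 0 t)) {t<..<2*t}"
    using assms by (intro nd_interval_lower) auto
  also have "\<dots> \<le> measure (density lborel (normal_density 0 t)) {s<..}"
    using assms by (intro nd_mono_set) auto
  also have "(2*t - t) * normal_density 0 t (2*t) = exp (-2) / sqrt (2 * pi)"
    using assms by (simp add: nd_val power2_eq_square)
  finally show ?thesis .
qed

lemma bound_b1:
  assumes "0 < t" "0 < s" "s \<le> t"
  shows "s * (exp (-1/2) / (sqrt (2 * pi) * t)) \<le> measure (density lborel (normal_density 0 t)) {0..<s}"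
proof -
  have "exp (-1/2) / (sqrt (2 * pi) * t) = normal_density 0 t t"
    using assms by (simp add: nd_val power2_eq_square)
  also have "\<dots> \<le> normal_density 0 t s" using assms by (intro nd_mono) auto
  finally have h: "exp (-1/2) / (sqrt (2 * pi) * t) \<le> normal_density 0 t s" .
  have "s * (exp (-1/2) / (sqrt (2 * pi) * t)) \<le> s * normal_density 0 t s"
    using assms h by (intro mult_left_mono) auto
  then have "s * (exp (-1/2) / (sqrt (2 * pi) * t)) \<le> (s - 0) * normal_density 0 t s" by simp
  also have "\<dots> \<le> measure (density lborel (normal_density 0 t)) {0<..<s}"
    using assms by (intro nd_interval_lower) auto
  also have "\<dots> \<le> measure (density lborel (normal_density 0 t)) {0..<s}"
    using assms by (intro nd_mono_set) auto
  finally show ?thesis .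
qed

lemma bound_a3:
  assumes "0 < t" "0 < b"
  shows "1/2 - b / (sqrt (2 * pi) * t) \<le> measure (density lborel (normal_density 0 t)) {b<..}"
proof -
  let ?N = "density lborel (normal_density 0 t)"
  interpret prob_space ?N by (rule nd_prob[OF assms(1)])
  have u: "{0<..} = {0<..b} \<union> {b<..}" using assms by auto
  have "measure ?N {0<..} = measure ?N {0<..b} + measure ?N {b<..}"
    by (subst u, rule finite_measure_Union) auto
  moreover have "measure ?N {0<..b} \<le> b * normal_density 0 t 0"
    using assms by (intro nd_interval_upper) auto
  moreover have "b * normal_density 0 t 0 = b / (sqrt (2 * pi) * t)" using assms by (simp add: nd_val)
  ultimately show ?thesis using nd_half(1)[OF assms(1)] by simp
qed

lemma bound_b3:
  assumes "0 < t" "0 < b"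
  shows "1/2 - t\<^sup>2 / b\<^sup>2 \<le> measure (density lborel (normal_density 0 t)) {0..<b}"
proof -
  let ?N = "density lborel (normal_density 0 t)"
  interpret prob_space ?N by (rule nd_prob[OF assms(1)])
  have u: "{0..} = {0..<b} \<union> {b..}" using assms by auto
  have "measure ?N {0..} = measure ?N {0..<b} + measure ?N {b..}"
    by (subst u, rule finite_measure_Union) auto
  moreover have "measure ?N {b..} \<le> t\<^sup>2 / b\<^sup>2" using assms by (intro nd_tail) auto
  moreover have "measure ?N {0<..} \<le> measure ?N {0..}" by (intro finite_measure_mono) auto
  ultimately show ?thesis using nd_half(1)[OF assms(1)] by simp
qed

lemma exp52: "exp (-5/2::real) \<ge> 1/27"
proof -
  have "exp (5/2::real) \<le> exp 3" by simp
  also have "exp (3::real) = exp 1 ^ 3" by (simp add: exp_of_nat_mult[symmetric])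
  also have "\<dots> \<le> 3 ^ 3" by (rule power_mono[OF exp_le]) simp
  finally have "exp (5/2::real) \<le> 27" by simp
  then show ?thesis by (simp add: exp_minus field_simps)
qed

lemma final_analysis:
  assumes t: "0 < t" and sg: "0 < sg" and eta: "\<eta> < 5/12"
    and H: "\<And>s. 0 < s \<Longrightarrow> 2 * measure (density lborel (normal_density 0 t)) {s<..} * measure (density lborel (normal_density 0 sg)) {0..<s} \<le> \<eta>"
  shows "t \<le> 20000 * sg * \<eta>"
proof -
  let ?k = "sqrt (2 * pi)"
  have k2: "?k * ?k = 2 * pi" by simp
  have kpos: "0 < ?k" by simp
  have kge: "2 \<le> ?k" using pi_ge_two by (simp add: real_le_rsqrt)
  have e52: "exp (-2) * exp (-1/2) = exp (-5/2::real)" by (simp flip: exp_add)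
  have ce: "1/108 \<le> exp (-5/2::real) / pi" using exp52 pi_less_4 pi_gt_zero
    by (simp add: field_simps)
  consider "t \<le> sg" | "sg < t" "t \<le> 100 * sg" | "100 * sg < t" by linarith
  then show ?thesis
  proof cases
    case 1
    have "exp (-2) / ?k * (t * (exp (-1/2) / (?k * sg))) \<le> measure (density lborel (normal_density 0 t)) {t<..} * measure (density lborel (normal_density 0 sg)) {0..<t}"
      using 1 t sg by (intro mult_mono bound_a1 bound_b1) auto
    moreover have "2 * (measure (density lborel (normal_density 0 t)) {t<..} * measure (density lborel (normal_density 0 sg)) {0..<t}) \<le> \<eta>"
      using H[of t] t by (simp add: mult.assoc)
    ultimately have "2 * (exp (-2) / ?k * (t * (exp (-1/2) / (?k * sg)))) \<le> \<eta>" by linarith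
    moreover have "2 * (exp (-2) / ?k * (t * (exp (-1/2) / (?k * sg)))) = (exp (-5/2) / pi) * (t / sg)"
      using e52 k2 sg by (simp add: field_simps)
    ultimately have "(1/108) * (t / sg) \<le> \<eta>" using ce t sg
      by (smt (verit) divide_pos_pos mult_right_mono)
    then have "t \<le> 108 * sg * \<eta>" using sg by (simp add: field_simps)
    moreover have "0 \<le> sg * \<eta>" using \<open>(1/108) * (t / sg) \<le> \<eta>\<close> t sg by (smt (verit) divide_pos_pos mult_nonneg_nonneg)
    ultimately show ?thesis by linarith
  next
    case 2
    have "exp (-2) / ?k * (sg * (exp (-1/2) / (?k * sg))) \<le> measure (density lborel (normal_density 0 t)) {sg<..} * measure (density lborel (normal_density 0 sg)) {0..<sg}"
      using 2 t sg by (intro mult_mono bound_a1 bound_b1) auto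
    moreover have "2 * (measure (density lborel (normal_density 0 t)) {sg<..} * measure (density lborel (normal_density 0 sg)) {0..<sg}) \<le> \<eta>"
      using H[of sg] sg by (simp add: mult.assoc)
    ultimately have "2 * (exp (-2) / ?k * (sg * (exp (-1/2) / (?k * sg)))) \<le> \<eta>" by linarith
    moreover have "2 * (exp (-2) / ?k * (sg * (exp (-1/2) / (?k * sg)))) = exp (-5/2) / pi"
      using e52 k2 sg by (simp add: field_simps)
    ultimately have "1/108 \<le> \<eta>" using ce by linarith
    then have "100 * sg * 1 \<le> 100 * sg * (200 * \<eta>)" using sg by (intro mult_left_mono) auto
    moreover have "100 * sg * (200 * \<eta>) = 20000 * sg * \<eta>" by simp
    ultimately show ?thesis using 2 by linarith
  next
    case 3
    have a: "1/2 - (4 * sg) / (?k * t) \<le> measure (density lborel (normal_density 0 t)) {4 * sg<..}"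
      using t sg by (intro bound_a3) auto
    have "(4 * sg) / (?k * t) \<le> (4 * sg) / (2 * t)"
      using kge t sg by (intro divide_left_mono) auto
    also have "\<dots> \<le> 2/100" using 3 t sg by (simp add: field_simps)
    finally have a': "48/100 \<le> measure (density lborel (normal_density 0 t)) {4 * sg<..}" using a by simp
    have b: "1/2 - sg\<^sup>2 / (4 * sg)\<^sup>2 \<le> measure (density lborel (normal_density 0 sg)) {0..<4 * sg}"
      using sg by (intro bound_b3) auto
    have "sg\<^sup>2 / (4 * sg)\<^sup>2 = 1/16" using sg by (simp add: field_simps power2_eq_square)
    then have b': "7/16 \<le> measure (density lborel (normal_density 0 sg)) {0..<4 * sg}" using b by simp
    have "48/100 * (7/16) \<le> measure (density lborel (normal_density 0 t)) {4 * sg<..} * measure (density lborel (normal_density 0 sg)) {0..<4 * sg}"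
      using a' b' by (intro mult_mono) auto
    then have "2 * (48/100 * (7/16)) \<le> \<eta>" using H[of "4 * sg"] sg by simp
    then show ?thesis using eta by simp
  qed
qed


lemma dotp_meas[measurable]: "dotp p v \<in> borel_measurable (rvec_space p)"
  unfolding dotp_def rvec_space_def by measurable

lemma neg_prod1: "(0::real) < a \<Longrightarrow> e < a \<Longrightarrow> a * (e - a) < 0"
  by (simp add: mult_pos_neg)
lemma neg_prod2: "(a::real) < 0 \<Longrightarrow> a < e \<Longrightarrow> a * (e - a) < 0"
  by (simp add: mult_neg_pos)

lemma nonneg_prod: "0 \<le> (a::real) * (e - a) \<Longrightarrow> (0 < a \<longrightarrow> a \<le> e) \<and> (a < 0 \<longrightarrow> e \<le> a)"
  by (metis neg_prod1 neg_prod2 not_le)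

lemma measure_rect:
  assumes "prob_space M" "prob_space N" "A \<in> sets M" "B \<in> sets N"
  shows "measure (M \<Otimes>\<^sub>M N) (A \<times> B) = measure M A * measure N B"
proof -
  interpret N: prob_space N by fact
  have "emeasure (M \<Otimes>\<^sub>M N) (A \<times> B) = emeasure M A * emeasure N B"
    by (rule N.emeasure_pair_measure_Times) (use assms in auto)
  then show ?thesis unfolding measure_def by (simp add: enn2real_mult)
qed

lemma rect_bound:
  fixes g :: "'a \<Rightarrow> real"
  assumes PM: "prob_space M" and PN: "prob_space N" and sN: "sets N = sets borel"
    and gm: "g \<in> borel_measurable M" and s: "0 < s"
  shows "measure (M \<Otimes>\<^sub>M N) {z \<in> space (M \<Otimes>\<^sub>M N). 0 \<le> g (fst z) * (snd z - g (fst z))}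
     + measure (distr M lborel g) {0<..} * measure N {..<0}
     + measure (distr M lborel g) {..<0} * measure N {0<..}
     + measure (distr M lborel g) {s<..} * measure N {0..<s}
     + measure (distr M lborel g) {..<-s} * measure N {-s<..0} \<le> 1"
proof -
  interpret P: prob_space "M \<Otimes>\<^sub>M N" using PM PN by (rule prob_space_pair)
  have spN: "space N = UNIV" using sets_eq_imp_space_eq[OF sN] by simp
  have sndm: "snd \<in> borel_measurable (M \<Otimes>\<^sub>M N)"
    using measurable_snd[of M N] measurable_cong_sets[OF refl sN] by blast
  have fstm: "(\<lambda>z. g (fst z)) \<in> borel_measurable (M \<Otimes>\<^sub>M N)"
    using measurable_comp[OF measurable_fst gm] by (simp add: comp_def)
  have hm: "(\<lambda>z. g (fst z) * (snd z - g (fst z))) \<in> borel_measurable (M \<Otimes>\<^sub>M N)"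
    using fstm sndm by (intro borel_measurable_times borel_measurable_diff) auto
  have gm': "g \<in> measurable M lborel" using gm by simp
  define G where "G B = g -` B \<inter> space M" for B
  have GB: "B \<in> sets borel \<Longrightarrow> G B \<in> sets M" for B unfolding G_def using measurable_sets[OF gm] by blast
  have mG: "measure (distr M lborel g) B = measure M (G B)" if "B \<in> sets borel" for B
    unfolding G_def by (rule measure_distr) (use gm that in auto)
  have mGC: "measure (M \<Otimes>\<^sub>M N) (G B \<times> C) = measure (distr M lborel g) B * measure N C"
    if "B \<in> sets borel" "C \<in> sets borel" for B C
    using measure_rect[OF PM PN GB[OF that(1)]] that sN mG[OF that(1)] by simp
  define T where "T = {z \<in> space (M \<Otimes>\<^sub>M N). 0 \<le> g (fst z) * (snd z - g (fst z))}"
  define R1 where "R1 = G {0<..} \<times> ({..<0}::real set)"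
  define R2 where "R2 = G {..<0} \<times> ({0<..}::real set)"
  define R3 where "R3 = G {s<..} \<times> {0..<s}"
  define R4 where "R4 = G {..<-s} \<times> {-s<..0}"
  have sT: "T \<in> sets (M \<Otimes>\<^sub>M N)"
  proof -
    have "T = (\<lambda>z. g (fst z) * (snd z - g (fst z))) -` {0..} \<inter> space (M \<Otimes>\<^sub>M N)"
      unfolding T_def by auto
    then show ?thesis using measurable_sets[OF hm, of "{0..}"] by simp
  qed
  have sR: "R1 \<in> sets (M \<Otimes>\<^sub>M N)" "R2 \<in> sets (M \<Otimes>\<^sub>M N)" "R3 \<in> sets (M \<Otimes>\<^sub>M N)" "R4 \<in> sets (M \<Otimes>\<^sub>M N)"
    unfolding R1_def R2_def R3_def R4_def by (intro pair_measureI GB; simp add: sN)+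
  have mR: "measure (M \<Otimes>\<^sub>M N) R1 = measure (distr M lborel g) {0<..} * measure N {..<0}"
     "measure (M \<Otimes>\<^sub>M N) R2 = measure (distr M lborel g) {..<0} * measure N {0<..}"
     "measure (M \<Otimes>\<^sub>M N) R3 = measure (distr M lborel g) {s<..} * measure N {0..<s}"
     "measure (M \<Otimes>\<^sub>M N) R4 = measure (distr M lborel g) {..<-s} * measure N {-s<..0}"
    unfolding R1_def R2_def R3_def R4_def by (rule mGC; simp)+
  have d1: "R3 \<inter> R4 = {}" unfolding R3_def R4_def G_def using s by auto
  have d2: "R2 \<inter> (R3 \<union> R4) = {}" unfolding R2_def R3_def R4_def G_def using s by auto
  have d3: "R1 \<inter> (R2 \<union> (R3 \<union> R4)) = {}" unfolding R1_def R2_def R3_def R4_def G_def using s by auto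
  have d4: "T \<inter> (R1 \<union> (R2 \<union> (R3 \<union> R4))) = {}"
    unfolding T_def R1_def R2_def R3_def R4_def G_def using s
    by (auto dest!: nonneg_prod)
  have "P.prob (T \<union> (R1 \<union> (R2 \<union> (R3 \<union> R4)))) = P.prob T + (P.prob R1 + (P.prob R2 + (P.prob R3 + P.prob R4)))"
    using sT sR d1 d2 d3 d4 by (simp add: P.finite_measure_Union)
  moreover have "P.prob (T \<union> (R1 \<union> (R2 \<union> (R3 \<union> R4)))) \<le> 1" by (rule P.prob_le_1)
  ultimately show ?thesis using mR unfolding T_def by simp
qed


lemma dotp_comm: "dotp p x y = dotp p y x"
  unfolding dotp_def by (simp add: mult.commute)

lemma dotp_diff: "dotp p (a - b) x = dotp p a x - dotp p b x"
  unfolding dotp_def by (simp add: algebra_simps sum_subtractf)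

lemma dotp_meas': "sets A = sets (rvec_space p) \<Longrightarrow> dotp p w \<in> borel_measurable A"
  using dotp_meas measurable_cong_sets by blast

lemma dotp_fst_meas: "sets A = sets (rvec_space p) \<Longrightarrow> (\<lambda>z. dotp p w (fst z)) \<in> borel_measurable (A \<Otimes>\<^sub>M B)"
  using measurable_comp[OF measurable_fst dotp_meas'[of A p w]] by (simp add: comp_def)

lemma snd_meas: "sets B = sets borel \<Longrightarrow> (snd :: _ \<Rightarrow> real) \<in> borel_measurable (A \<Otimes>\<^sub>M B)"
  using measurable_snd[of A B] measurable_cong_sets[OF refl, of B borel] by blast

theorem lemma4:
  shows "\<exists>C::real. C > 0 \<and>
    (\<forall>(p::nat) (S::nat \<Rightarrow> nat \<Rightarrow> real) (\<sigma>::real) (\<beta>::nat \<Rightarrow> real) (\<alpha>::nat \<Rightarrow> real)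
       (U::(nat \<Rightarrow> real) set) (\<eta>::real) (M::(nat \<Rightarrow> real) measure).
      covariance_matrix p S \<longrightarrow> 0 < \<sigma> \<longrightarrow> centered_gaussian p S M \<longrightarrow>
      \<beta> \<in> rvec p \<longrightarrow> \<alpha> \<in> rvec p \<longrightarrow> U \<subseteq> rvec p - {\<lambda>_. 0} \<longrightarrow> \<alpha> - \<beta> \<in> U \<longrightarrow>
      0 \<le> \<eta> \<longrightarrow> \<eta> < 5/12 \<longrightarrow>
      depth p U \<alpha> (regression_law p \<sigma> \<beta> M) \<ge> 1/2 - \<eta> \<longrightarrow>
      sqrt (quad_form p S (\<alpha> - \<beta>)) \<le> C * \<sigma> * \<eta>)"
proof (intro exI[of _ "20000"] conjI allI impI)
  show "(0::real) < 20000" by simp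
  fix p S \<sigma> \<beta> \<alpha> U \<eta> M
  assume cov: "covariance_matrix p S" and sp: "0 < \<sigma>" and cg: "centered_gaussian p S M"
    and hb: "\<beta> \<in> rvec p" and ha: "\<alpha> \<in> rvec p" and hU: "U \<subseteq> rvec p - {\<lambda>_. 0}"
    and hv: "\<alpha> - \<beta> \<in> U" and e0: "0 \<le> \<eta>" and e1: "\<eta> < 5/12"
    and hd: "depth p U \<alpha> (regression_law p \<sigma> \<beta> M) \<ge> 1/2 - \<eta>"
  define v where "v = \<alpha> - \<beta>"
  define q where "q = quad_form p S v"
  have q0: "0 \<le> q" using cov by (simp add: covariance_matrix_def q_def)
  show "sqrt (quad_form p S (\<alpha> - \<beta>)) \<le> 20000 * \<sigma> * \<eta>"
  proof (cases "q = 0")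
    case True then show ?thesis using sp e0 by (simp add: q_def v_def)
  next
    case False
    define t where "t = sqrt q"
    have t: "0 < t" using q0 False by (simp add: t_def)
    have sM: "sets M = sets (rvec_space p)" and PM: "prob_space M"
      and dist: "distr M lborel (dotp p v) = normal_law 0 q"
      using cg unfolding centered_gaussian_def q_def by auto
    have distt: "distr M lborel (dotp p v) = density lborel (normal_density 0 t)"
      using dist q0 False by (simp add: normal_law_def t_def)
    define N where "N = normal_law 0 (\<sigma>\<^sup>2)"
    have Nd: "N = density lborel (normal_density 0 \<sigma>)"
      using sp by (simp add: N_def normal_law_def)
    have PN: "prob_space N" unfolding Nd by (rule nd_prob[OF sp])
    have sN: "sets N = sets borel" unfolding Nd by simp
    have gm: "dotp p v \<in> borel_measurable M" by (rule dotp_meas'[OF sM])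
    define P where "P = regression_law p \<sigma> \<beta> M"
    define f where "f = (\<lambda>z::(nat \<Rightarrow> real) \<times> real. (fst z, dotp p \<beta> (fst z) + snd z))"
    have Pf: "P = distr (M \<Otimes>\<^sub>M N) (rvec_space p \<Otimes>\<^sub>M lborel) f"
      unfolding P_def regression_law_def N_def f_def by (simp add: case_prod_beta')
    have fm: "f \<in> measurable (M \<Otimes>\<^sub>M N) (rvec_space p \<Otimes>\<^sub>M lborel)"
    proof -
      have "fst \<in> measurable (M \<Otimes>\<^sub>M N) (rvec_space p)"
        using measurable_fst[of M N] measurable_cong_sets[OF refl sM] by blast
      moreover have "(\<lambda>z. dotp p \<beta> (fst z) + snd z) \<in> borel_measurable (M \<Otimes>\<^sub>M N)"
        using dotp_fst_meas[OF sM, of \<beta> N] snd_meas[OF sN, of M] by (intro borel_measurable_add) auto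
      ultimately show ?thesis unfolding f_def by (intro measurable_Pair) auto
    qed
    define Sv where "Sv = {z \<in> space P. 0 \<le> dotp p v (fst z) * (snd z - dotp p (fst z) \<alpha>)}"
    define T where "T = {z \<in> space (M \<Otimes>\<^sub>M N). 0 \<le> dotp p v (fst z) * (snd z - dotp p v (fst z))}"
    have spP: "space P = space (rvec_space p \<Otimes>\<^sub>M lborel)" unfolding Pf by simp
    have Ssets: "Sv \<in> sets (rvec_space p \<Otimes>\<^sub>M lborel)"
    proof -
      have hm: "(\<lambda>z. dotp p v (fst z) * (snd z - dotp p \<alpha> (fst z))) \<in> borel_measurable (rvec_space p \<Otimes>\<^sub>M lborel)"
        using dotp_fst_meas[of "rvec_space p" p v lborel] dotp_fst_meas[of "rvec_space p" p \<alpha> lborel]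
          snd_meas[of lborel "rvec_space p"]
        by (intro borel_measurable_times borel_measurable_diff) auto
      have "Sv = (\<lambda>z. dotp p v (fst z) * (snd z - dotp p \<alpha> (fst z))) -` {0..} \<inter> space (rvec_space p \<Otimes>\<^sub>M lborel)"
        unfolding Sv_def spP by (auto simp: dotp_comm)
      then show ?thesis using measurable_sets[OF hm, of "{0..}"] by simp
    qed
    have spM: "space M = space (rvec_space p)" using sets_eq_imp_space_eq[OF sM] .
    have pre: "f -` Sv \<inter> space (M \<Otimes>\<^sub>M N) = T"
    proof -
      have "f z \<in> space (rvec_space p \<Otimes>\<^sub>M lborel)" if "z \<in> space (M \<Otimes>\<^sub>M N)" for z
        using measurable_space[OF fm that] .
      then show ?thesis unfolding Sv_def T_def spP f_def v_def
        by (auto simp: dotp_diff dotp_comm[of p _ \<alpha>] algebra_simps)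
    qed
    have mPT: "measure P Sv = measure (M \<Otimes>\<^sub>M N) T"
      unfolding Pf using measure_distr[OF fm Ssets] pre by simp
    have dep: "depth p U \<alpha> P \<le> measure P Sv"
      unfolding depth_def Sv_def v_def
      by (rule cINF_lower) (auto intro: bdd_belowI[of _ 0] simp: hv)
    have K: "2 * measure (density lborel (normal_density 0 t)) {s<..} * measure (density lborel (normal_density 0 \<sigma>)) {0..<s} \<le> \<eta>"
      if s: "0 < s" for s
    proof -
      note rb = rect_bound[OF PM PN sN gm s]
      have u1: "uminus -` {s<..} = {..<-s::real}" by auto
      have u2: "uminus -` {0..<s} = {-s<..0::real}" by auto
      have sym1: "measure (density lborel (normal_density 0 t)) {..<-s} = measure (density lborel (normal_density 0 t)) {s<..}"
        using nd_measure_sym[of "{s<..}" t] u1 by simp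
      have sym2: "measure (density lborel (normal_density 0 \<sigma>)) {-s<..0} = measure (density lborel (normal_density 0 \<sigma>)) {0..<s}"
        using nd_measure_sym[of "{0..<s}" \<sigma>] u2 by simp
      have "1/2 - \<eta> \<le> measure (M \<Otimes>\<^sub>M N) T" using hd dep mPT unfolding P_def by simp
      then show ?thesis using rb unfolding distt Nd T_def
        using sym1 sym2 nd_half[OF t] nd_half[OF sp] by simp
    qed
    have "t \<le> 20000 * \<sigma> * \<eta>" by (rule final_analysis[OF t sp e1 K])
    then show ?thesis by (simp add: t_def q_def v_def)
  qed
qed

end
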